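(* Let $d\geq 1$ and let $\sigma=(s_d,s_{d-1},\ldots,s_0)$ be any sequence of signs $s_j\in\{+,-\}$ with $s_d=+$. If $d$ is even and $s_0=+$ (resp. $s_0=-$), then there exists a real polynomial $P=\sum_{j=0}^d a_jx^j$ of degree $d$ with all $a_j\neq 0$ and $\operatorname{sgn} a_j=s_j$ for all $j$, which has exactly $0$ positive and $0$ negative roots (resp. exactly $1$ positive and $1$ negative root). If $d$ is odd and $s_0=+$ (resp. $s_0=-$), then there exists such a polynomial $P$ with sign pattern $\sigma$ having exactly $0$ positive and $1$ negative root (resp. exactly $1$ positive and $0$ negative roots).
   Context: A real polynomial $P=\sum_{j=0}^d a_jx^j$ of degree $d$ with all coefficients nonzero is said to define the sign pattern $\sigma=(s_d,\ldots,s_0)$ if $s_j=\operatorname{sgn}a_j$ for all $j$. A pair $(pos,neg)$ is realized for $\sigma$ by $P$ if $P$ defines $\sigma$ and has exactly $pos$ positive and exactly $neg$ negative real roots. *)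

theory Defs
  imports "HOL-Computational_Algebra.Polynomial"
begin

text \<open>A sign pattern of length d+1 is represented by a function s :: nat => real with
  s j in {1,-1} for j <= d (only values at j <= d matter).\<close>

definition defines_sign_pattern :: "real poly \<Rightarrow> nat \<Rightarrow> (nat \<Rightarrow> real) \<Rightarrow> bool" where
  "defines_sign_pattern p d s \<longleftrightarrow>
     degree p = d \<and> (\<forall>j\<le>d. coeff p j \<noteq> 0 \<and> sgn (coeff p j) = s j)"

definition num_pos_roots :: "real poly \<Rightarrow> nat" where
  "num_pos_roots p = (\<Sum>x\<in>{x. x > 0 \<and> poly p x = 0}. order x p)"

definition num_neg_roots :: "real poly \<Rightarrow> nat" where
  "num_neg_roots p = (\<Sum>x\<in>{x. x < 0 \<and> poly p x = 0}. order x p)"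

definition realizes :: "real poly \<Rightarrow> nat \<Rightarrow> (nat \<Rightarrow> real) \<Rightarrow> nat \<Rightarrow> nat \<Rightarrow> bool" where
  "realizes p d s pos neg \<longleftrightarrow>
     defines_sign_pattern p d s \<and> num_pos_roots p = pos \<and> num_neg_roots p = neg"

end

theory Submission imports Defs begin

lemma lin1: fixes y A B t :: real
  assumes "\<bar>y\<bar> = A" "\<bar>B\<bar> \<le> (1+A)/16" "y + t + B = 0" "t = 1 \<or> t = -1"
  shows "1/2 \<le> A \<and> A \<le> 2 \<and> y*t < 0"
  using assms(4) proof
  assume "t = 1" then show ?thesis using assms(1-3) by (simp add: abs_if split: if_splits)
next
  assume "t = -1" then show ?thesis using assms(1-3) by (simp add: abs_if split: if_splits)
qed
lemma lin2: fixes y A B :: real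
  assumes "\<bar>y\<bar> = A" "\<bar>B\<bar> \<le> (1+A)/16" "y \<ge> 2"
  shows "y + -1 + B > 0" using assms by (simp add: abs_if split: if_splits)
lemma lin3: fixes y A B :: real
  assumes "\<bar>y\<bar> = A" "\<bar>B\<bar> \<le> (1+A)/16" "y \<le> -2"
  shows "y + 1 + B < 0" using assms by (simp add: abs_if split: if_splits)

lemma pow_le_1_plus:
  fixes x :: real assumes "j \<le> d" shows "\<bar>x\<bar>^j \<le> 1 + \<bar>x\<bar>^d"
proof (cases "\<bar>x\<bar> \<le> 1")
  case True
  then have "\<bar>x\<bar>^j \<le> 1" by (simp add: power_le_one)
  then show ?thesis by (smt (verit) zero_le_power abs_ge_zero)
next
  case False
  then have "\<bar>x\<bar>^j \<le> \<bar>x\<bar>^d" using assms by (intro power_increasing) auto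
  then show ?thesis by simp
qed

lemma bnd_M:
  fixes x :: real and s :: "nat \<Rightarrow> real"
  assumes "\<forall>j\<le>d. s j = 1 \<or> s j = -1"
  shows "\<bar>\<Sum>j\<in>{1..<d}. s j * x^j\<bar> \<le> real (d - 1) * (1 + \<bar>x\<bar>^d)"
proof -
  have "\<bar>\<Sum>j\<in>{1..<d}. s j * x^j\<bar> \<le> (\<Sum>j\<in>{1..<d}. \<bar>s j * x^j\<bar>)" by (rule sum_abs)
  also have "\<dots> \<le> (\<Sum>j\<in>{1..<d}. 1 + \<bar>x\<bar>^d)"
  proof (rule sum_mono)
    fix j assume j: "j \<in> {1..<d}"
    then have "\<bar>s j\<bar> = 1" using assms by (metis abs_1 abs_minus_cancel atLeastLessThan_iff less_imp_le)
    then show "\<bar>s j * x^j\<bar> \<le> 1 + \<bar>x\<bar>^d" using pow_le_1_plus[of j d x] j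
      by (simp add: abs_mult power_abs)
  qed
  also have "\<dots> = real (d - 1) * (1 + \<bar>x\<bar>^d)" by simp
  finally show ?thesis .
qed

lemma bnd_M':
  fixes x :: real and s :: "nat \<Rightarrow> real"
  assumes "\<forall>j\<le>d. s j = 1 \<or> s j = -1" and "\<bar>x\<bar>^d \<le> 2"
  shows "\<bar>\<Sum>j\<in>{1..<d}. of_nat j * s j * x^(j-1)\<bar> \<le> real d * (3 * real d)"
proof -
  have "\<bar>\<Sum>j\<in>{1..<d}. of_nat j * s j * x^(j-1)\<bar> \<le> (\<Sum>j\<in>{1..<d}. \<bar>of_nat j * s j * x^(j-1)\<bar>)" by (rule sum_abs)
  also have "\<dots> \<le> (\<Sum>j\<in>{1..<d}. 3 * real d)"
  proof (rule sum_mono)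
    fix j assume j: "j \<in> {1..<d}"
    then have "\<bar>s j\<bar> = 1" using assms by (metis abs_1 abs_minus_cancel atLeastLessThan_iff less_imp_le)
    moreover have "\<bar>x\<bar>^(j-1) \<le> 3" using pow_le_1_plus[of "j-1" d x] j assms(2) by force
    moreover have "real j \<le> real d" using j by auto
    ultimately have "real j * \<bar>x\<bar>^(j-1) \<le> real d * 3"
      by (intro mult_mono) auto
    then show "\<bar>of_nat j * s j * x^(j-1)\<bar> \<le> 3 * real d" using \<open>\<bar>s j\<bar> = 1\<close>
      by (simp add: abs_mult power_abs mult.commute)
  qed
  also have "\<dots> \<le> real d * (3 * real d)" using mult_right_mono[of "real (d-1)" "real d" "real d"] by simp
  finally show ?thesis .
qed

lemma pderiv_sum': "pderiv (sum f A) = (\<Sum>x\<in>A. pderiv (f x))"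
  using higher_pderiv_sum[of 1 f A] by simp

lemma poly_P:
  fixes s :: "nat \<Rightarrow> real"
  shows "poly (monom 1 d + [:s 0:] + smult e (\<Sum>j\<in>{1..<d}. monom (s j) j)) x
     = x^d + s 0 + e * (\<Sum>j\<in>{1..<d}. s j * x^j)"
  by (simp add: poly_sum poly_monom)

lemma poly_P':
  fixes s :: "nat \<Rightarrow> real"
  shows "poly (pderiv (monom 1 d + [:s 0:] + smult e (\<Sum>j\<in>{1..<d}. monom (s j) j))) x
     = real d * x^(d-1) + e * (\<Sum>j\<in>{1..<d}. of_nat j * s j * x^(j-1))"
  by (simp add: poly_sum poly_monom pderiv_add pderiv_smult pderiv_sum' pderiv_monom pderiv_pCons)

lemma coeff_P:
  fixes s :: "nat \<Rightarrow> real"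
  shows "coeff (monom 1 d + [:s 0:] + smult e (\<Sum>j\<in>{1..<d}. monom (s j) j)) k
     = (if k = d then 1 else 0) + (if k = 0 then s 0 else 0) + e * (if k \<in> {1..<d} then s k else 0)"
  by (simp add: coeff_sum coeff_monom coeff_pCons split: nat.split)

lemma between_pow:
  fixes a b c :: real
  assumes "a < c" "c < b" "0 < a \<or> b < 0"
    "L \<le> \<bar>a\<bar>^d" "\<bar>a\<bar>^d \<le> U" "L \<le> \<bar>b\<bar>^d" "\<bar>b\<bar>^d \<le> U"
  shows "L \<le> \<bar>c\<bar>^d \<and> \<bar>c\<bar>^d \<le> U"
proof (cases "0 < a")
  case True
  then have "\<bar>a\<bar> \<le> \<bar>c\<bar>" "\<bar>c\<bar> \<le> \<bar>b\<bar>" using assms by auto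
  then have "\<bar>a\<bar>^d \<le> \<bar>c\<bar>^d" "\<bar>c\<bar>^d \<le> \<bar>b\<bar>^d" by (auto intro: power_mono)
  then show ?thesis using assms by linarith
next
  case False
  then have "\<bar>b\<bar> \<le> \<bar>c\<bar>" "\<bar>c\<bar> \<le> \<bar>a\<bar>" using assms by auto
  then have "\<bar>b\<bar>^d \<le> \<bar>c\<bar>^d" "\<bar>c\<bar>^d \<le> \<bar>a\<bar>^d" by (auto intro: power_mono)
  then show ?thesis using assms by linarith
qed

lemma rolle_poly:
  fixes p :: "real poly" and a b :: real
  assumes "a < b" "poly p a = 0" "poly p b = 0"
  obtains c where "a < c" "c < b" "poly (pderiv p) c = 0"
proof -
  obtain c where c: "a < c" "c < b" "DERIV (poly p) c :> 0"
  proof -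
    have "continuous_on {a..b} (poly p)" by (intro continuous_intros)
    moreover have "\<And>x. poly p differentiable (at x)"
      using poly_DERIV real_differentiable_def by blast
    ultimately show ?thesis using Rolle[of a b "poly p"] assms that by auto
  qed
  then have "poly (pderiv p) c = 0" using DERIV_unique poly_DERIV by blast
  then show ?thesis using c that by blast
qed

lemma count_one:
  fixes p :: "real poly"
  assumes "p \<noteq> 0" "r \<in> S" "S = {x. Q x \<and> poly p x = 0}"
    "\<And>a b. a < b \<Longrightarrow> a \<in> S \<Longrightarrow> b \<in> S \<Longrightarrow> False"
    "\<And>x. x \<in> S \<Longrightarrow> poly (pderiv p) x \<noteq> 0"
  shows "(\<Sum>x\<in>S. order x p) = 1"
proof -
  have "S = {r}"
  proof
    show "S \<subseteq> {r}"
    proof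
      fix x assume "x \<in> S"
      then show "x \<in> {r}" using assms(2) assms(4)[of x r] assms(4)[of r x]
        by (cases "x < r"; cases "r < x") auto
    qed
  qed (use assms in auto)
  moreover have "order r p = 1"
    using order_pderiv[OF assms(1), of r] assms order_0I[of "pderiv p" r] by auto
  ultimately show ?thesis by simp
qed

theorem mainTheorem1:
  fixes d :: nat and s :: "nat \<Rightarrow> real"
  assumes "d \<ge> 1"
    and "\<forall>j\<le>d. s j = 1 \<or> s j = -1"
    and "s d = 1"
  shows "(even d \<and> s 0 = 1 \<longrightarrow> (\<exists>p. realizes p d s 0 0))
       \<and> (even d \<and> s 0 = -1 \<longrightarrow> (\<exists>p. realizes p d s 1 1))
       \<and> (odd d \<and> s 0 = 1 \<longrightarrow> (\<exists>p. realizes p d s 0 1))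
       \<and> (odd d \<and> s 0 = -1 \<longrightarrow> (\<exists>p. realizes p d s 1 0))"
proof -
  define e :: real where "e = 1 / (16 * real d)"
  define P where "P = monom 1 d + [:s 0:] + smult e (\<Sum>j\<in>{1..<d}. monom (s j) j)"
  define M where "M = (\<lambda>x::real. \<Sum>j\<in>{1..<d}. s j * x^j)"
  define M' where "M' = (\<lambda>x::real. \<Sum>j\<in>{1..<d}. of_nat j * s j * x^(j-1))"
  have dpos: "real d \<ge> 1" using assms(1) by simp
  have epos: "e > 0" using dpos by (simp add: e_def)
  have s0: "s 0 = 1 \<or> s 0 = -1" using assms(2) by auto
  have polyP: "poly P x = x^d + s 0 + e * M x" for x
    unfolding P_def M_def by (rule poly_P)
  have polyP': "poly (pderiv P) x = real d * x^(d-1) + e * M' x" for x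
    unfolding P_def M'_def by (rule poly_P')
  have ed: "e * real (d - 1) \<le> 1/16"
    using dpos by (simp add: e_def of_nat_diff field_simps)
  have bM: "\<bar>e * M x\<bar> \<le> (1 + \<bar>x\<bar>^d) / 16" for x
  proof -
    have "\<bar>e * M x\<bar> = e * \<bar>M x\<bar>" using epos by (simp add: abs_mult)
    also have "\<dots> \<le> e * (real (d - 1) * (1 + \<bar>x\<bar>^d))"
      using mult_left_mono[OF bnd_M[OF assms(2), of x], of e] epos unfolding M_def by linarith
    also have "\<dots> = (e * real (d - 1)) * (1 + \<bar>x\<bar>^d)" by simp
    also have "\<dots> \<le> (1/16) * (1 + \<bar>x\<bar>^d)"
      using ed by (intro mult_right_mono) (auto intro: add_nonneg_nonneg)
    finally show ?thesis by simp
  qed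
  have root: "1/2 \<le> \<bar>x\<bar>^d \<and> \<bar>x\<bar>^d \<le> 2 \<and> x^d * s 0 < 0" if "poly P x = 0" for x
  proof -
    have a: "\<bar>x^d\<bar> = \<bar>x\<bar>^d" by (simp add: power_abs)
    have "x^d + s 0 + e * M x = 0" using that polyP by simp
    then show ?thesis using lin1[OF a bM[of x] _ s0] by simp
  qed
  have big1: "poly P x > 0" if "s 0 = -1" "x^d \<ge> 2" for x
  proof -
    have a: "\<bar>x^d\<bar> = \<bar>x\<bar>^d" by (simp add: power_abs)
    show ?thesis using lin2[OF a bM[of x]] that polyP[of x] by simp
  qed
  have big2: "poly P x < 0" if "s 0 = 1" "x^d \<le> -2" for x
  proof -
    have a: "\<bar>x^d\<bar> = \<bar>x\<bar>^d" by (simp add: power_abs)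
    show ?thesis using lin3[OF a bM[of x]] that polyP[of x] by simp
  qed
  have deriv: "poly (pderiv P) x \<noteq> 0" if "1/2 \<le> \<bar>x\<bar>^d" "\<bar>x\<bar>^d \<le> 2" for x
  proof -
    have x2: "\<bar>x\<bar> \<le> 2"
    proof (cases "\<bar>x\<bar> \<le> 1")
      case False
      then have "\<bar>x\<bar>^1 \<le> \<bar>x\<bar>^d" using assms(1) by (intro power_increasing) auto
      then show ?thesis using that by simp
    qed simp
    have "\<bar>x\<bar>^d = \<bar>x\<bar> * \<bar>x\<bar>^(d-1)" using assms(1)
      by (metis Suc_diff_le diff_Suc_1 power_Suc)
    also have "\<dots> \<le> 2 * \<bar>x\<bar>^(d-1)" using mult_right_mono[OF x2, of "\<bar>x\<bar>^(d-1)"] by simp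
    finally have x1: "\<bar>x\<bar>^(d-1) \<ge> 1/4" using that by simp
    have "\<bar>real d * x^(d-1)\<bar> = real d * \<bar>x\<bar>^(d-1)" by (simp add: abs_mult power_abs)
    also have "\<dots> \<ge> real d * (1/4)" using x1 by (intro mult_left_mono) auto
    finally have A: "\<bar>real d * x^(d-1)\<bar> \<ge> real d / 4" by simp
    have "\<bar>e * M' x\<bar> = e * \<bar>M' x\<bar>" using epos by (simp add: abs_mult)
    also have "\<dots> \<le> e * (real d * (3 * real d))"
      using mult_left_mono[OF bnd_M'[OF assms(2) that(2)], of e] epos unfolding M'_def by linarith
    also have "\<dots> = 3 * real d / 16" using dpos by (simp add: e_def field_simps)
    finally have B: "\<bar>e * M' x\<bar> \<le> 3 * real d / 16" .
    show ?thesis using A B dpos polyP'[of x] by auto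
  qed
  have coeffP: "coeff P k = (if k = d then 1 else 0) + (if k = 0 then s 0 else 0) + e * (if k \<in> {1..<d} then s k else 0)" for k
    unfolding P_def by (rule coeff_P)
  have degP: "degree P = d"
  proof (rule antisym)
    show "degree P \<le> d" by (rule degree_le) (auto simp: coeffP)
    show "d \<le> degree P" by (rule le_degree) (use assms(1) in \<open>simp add: coeffP\<close>)
  qed
  have Pnz: "P \<noteq> 0" using degP assms(1) by auto
  have dsp0: "coeff P j \<noteq> 0 \<and> sgn (coeff P j) = s j" if j: "j \<le> d" for j
  proof -
    consider "j = d" | "j = 0" | "j \<in> {1..<d}" using j assms(1) by force
    then show "coeff P j \<noteq> 0 \<and> sgn (coeff P j) = s j"
    proof cases
      case 1 then show ?thesis using assms(1,3) by (simp add: coeffP)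
    next
      case 2 then show ?thesis using assms(1) s0 by (auto simp: coeffP)
    next
      case 3
      then have "s j = 1 \<or> s j = -1" using assms(2) by auto
      then show ?thesis using 3 epos by (auto simp: coeffP sgn_mult)
    qed
  qed
  have dsp: "defines_sign_pattern P d s"
    unfolding defines_sign_pattern_def using degP dsp0 by blast
  have fin: "finite {x. poly P x = 0}" using poly_roots_finite[OF Pnz] .
  have none: "(\<Sum>x\<in>{x. Q x \<and> poly P x = 0}. order x P) = 0"
    if "\<And>x. Q x \<Longrightarrow> poly P x \<noteq> 0" for Q
  proof -
    have "{x. Q x \<and> poly P x = 0} = {}" using that by auto
    then show ?thesis by (metis sum.empty)
  qed
  have two: "False" if h: "a < b" "poly P a = 0" "poly P b = 0" "0 < a \<or> b < 0" for a b
  proof -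
    obtain c where c: "a < c" "c < b" "poly (pderiv P) c = 0" using rolle_poly[OF h(1-3)] by blast
    have "1/2 \<le> \<bar>c\<bar>^d \<and> \<bar>c\<bar>^d \<le> (2::real)"
      using between_pow[OF c(1,2) h(4), of "1/2" d 2] root[OF h(2)] root[OF h(3)] by blast
    then show False using deriv c by blast
  qed
  have expos: "\<exists>r. 0 < r \<and> poly P r = 0" if "s 0 = -1"
  proof -
    have "poly P 0 < 0" using polyP[of 0] that assms(1) by (simp add: M_def power_0_left)
    moreover have "poly P 2 > 0"
    proof (rule big1[OF that])
      have "(2::real)^1 \<le> 2^d" using assms(1) by (intro power_increasing) auto
      then show "(2::real) \<le> 2^d" by simp
    qed
    ultimately have "\<exists>x>0. x < 2 \<and> poly P x = 0" using poly_IVT_pos[of 0 2 P] by simp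
    then show ?thesis by blast
  qed
  have onepos: "num_pos_roots P = 1" if h0: "s 0 = -1"
  proof -
    obtain r where r: "0 < r" "poly P r = 0" using expos[OF h0] by blast
    show ?thesis
      unfolding num_pos_roots_def
    proof (rule count_one[OF Pnz _ refl])
      show "r \<in> {x. 0 < x \<and> poly P x = 0}" using r by simp
    next
      fix a b assume "a < b" "a \<in> {x. 0 < x \<and> poly P x = 0}" "b \<in> {x. 0 < x \<and> poly P x = 0}"
      then show False using two[of a b] by simp
    next
      fix x assume "x \<in> {x. 0 < x \<and> poly P x = 0}"
      then have "poly P x = 0" by simp
      from root[OF this] show "poly (pderiv P) x \<noteq> 0" using deriv[of x] by simp
    qed
  qed
  have exneg: "\<exists>r. r < 0 \<and> poly P r = 0" if "even d \<and> s 0 = -1 \<or> odd d \<and> s 0 = 1"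
  proof -
    have p2: "(-2::real)^d = (if even d then 2^d else - (2^d))" by simp
    have "(2::real)^1 \<le> 2^d" using assms(1) by (intro power_increasing) auto
    then have q: "(2::real) \<le> 2^d" by simp
    from that show ?thesis
    proof
      assume h: "even d \<and> s 0 = -1"
      have "poly P 0 < 0" using polyP[of 0] h assms(1) by (simp add: M_def power_0_left)
      moreover have "poly P (-2) > 0" using big1[of "-2"] h p2 q by simp
      ultimately have "\<exists>x>-2. x < 0 \<and> poly P x = 0" using poly_IVT_neg[of "-2" 0 P] by simp
      then show ?thesis by blast
    next
      assume h: "odd d \<and> s 0 = 1"
      have "poly P 0 > 0" using polyP[of 0] h assms(1) by (simp add: M_def power_0_left)
      moreover have "poly P (-2) < 0" using big2[of "-2"] h p2 q by simp
      ultimately have "\<exists>x>-2. x < 0 \<and> poly P x = 0" using poly_IVT_pos[of "-2" 0 P] by simp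
      then show ?thesis by blast
    qed
  qed
  have oneneg: "num_neg_roots P = 1" if h0: "even d \<and> s 0 = -1 \<or> odd d \<and> s 0 = 1"
  proof -
    obtain r where r: "r < 0" "poly P r = 0" using exneg[OF h0] by blast
    show ?thesis
      unfolding num_neg_roots_def
    proof (rule count_one[OF Pnz _ refl])
      show "r \<in> {x. x < 0 \<and> poly P x = 0}" using r by simp
    next
      fix a b assume "a < b" "a \<in> {x. x < 0 \<and> poly P x = 0}" "b \<in> {x. x < 0 \<and> poly P x = 0}"
      then show False using two[of a b] by simp
    next
      fix x assume "x \<in> {x. x < 0 \<and> poly P x = 0}"
      then have "poly P x = 0" by simp
      from root[OF this] show "poly (pderiv P) x \<noteq> 0" using deriv[of x] by simp
    qed
  qed
  have nopos: "num_pos_roots P = 0" if "s 0 = 1"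
    unfolding num_pos_roots_def
  proof (rule none)
    fix x :: real assume "0 < x"
    then have "x^d > 0" by simp
    then show "poly P x \<noteq> 0" using root[of x] that by auto
  qed
  have noneg: "num_neg_roots P = 0" if "odd d" "s 0 = -1"
    unfolding num_neg_roots_def
  proof (rule none)
    fix x :: real assume "x < 0"
    then have "x^d < 0" using that(1) by (simp add: odd_pos power_less_zero_eq)
    then show "poly P x \<noteq> 0" using root[of x] that by auto
  qed
  have noneg2: "num_neg_roots P = 0" if "even d" "s 0 = 1"
    unfolding num_neg_roots_def
  proof (rule none)
    fix x :: real
    have "x^d \<ge> 0" using that(1) by (simp add: zero_le_even_power)
    then show "poly P x \<noteq> 0" using root[of x] that by auto
  qed
  have r1: "even d \<and> s 0 = 1 \<longrightarrow> (\<exists>p. realizes p d s 0 0)"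
  proof
    assume h: "even d \<and> s 0 = 1"
    have "realizes P d s 0 0" unfolding realizes_def using dsp nopos[OF conjunct2[OF h]] noneg2[OF conjunct1[OF h] conjunct2[OF h]] by simp
    then show "\<exists>p. realizes p d s 0 0" by blast
  qed
  have r2: "even d \<and> s 0 = -1 \<longrightarrow> (\<exists>p. realizes p d s 1 1)"
  proof
    assume h: "even d \<and> s 0 = -1"
    have "realizes P d s 1 1" unfolding realizes_def using dsp onepos[OF conjunct2[OF h]] oneneg h by simp
    then show "\<exists>p. realizes p d s 1 1" by blast
  qed
  have r3: "odd d \<and> s 0 = 1 \<longrightarrow> (\<exists>p. realizes p d s 0 1)"
  proof
    assume h: "odd d \<and> s 0 = 1"
    have "realizes P d s 0 1" unfolding realizes_def using dsp nopos[OF conjunct2[OF h]] oneneg h by simp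
    then show "\<exists>p. realizes p d s 0 1" by blast
  qed
  have r4: "odd d \<and> s 0 = -1 \<longrightarrow> (\<exists>p. realizes p d s 1 0)"
  proof
    assume h: "odd d \<and> s 0 = -1"
    have "realizes P d s 1 0" unfolding realizes_def using dsp onepos[OF conjunct2[OF h]] noneg[OF conjunct1[OF h] conjunct2[OF h]] by simp
    then show "\<exists>p. realizes p d s 1 0" by blast
  qed
  show ?thesis using r1 r2 r3 r4 by (intro conjI)
qed

end
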